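(* Let $t\ge1$ and $G=\prod_{i=1}^t K_{n_i}$ with all $n_i\ge2$. Then $$\gamma(G)\le 2^t-A(t,2,t-1)\le 3\cdot 2^{t-2}.$$
   Context: Vertices of $\prod_{i=1}^t K_{n_i}$ are tuples $(x_1,\dots,x_t)$ with $x_i\in\{0,\dots,n_i-1\}$, adjacent iff they differ in every coordinate. $\gamma(G)$ is the domination number: the minimum size of a set $D$ such that every vertex is in $D$ or adjacent to a vertex of $D$. $A(t,d,t-1)$ denotes the maximum number of binary vectors of length $t$ such that any two distinct ones have Hamming distance between $d$ and $t-1$ inclusive. *)

theory Defs
  imports Complex_Main "HOL-Library.FuncSet"
begin

text \<open>Vertex set of the direct product K_{n_0} x ... x K_{n_{t-1}}:
  tuples represented as extensional functions on {..<t}.\<close>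
definition prod_verts :: "nat \<Rightarrow> (nat \<Rightarrow> nat) \<Rightarrow> (nat \<Rightarrow> nat) set" where
  "prod_verts t n = (\<Pi>\<^sub>E i\<in>{..<t}. {..<n i})"

definition prod_adj :: "nat \<Rightarrow> (nat \<Rightarrow> nat) \<Rightarrow> (nat \<Rightarrow> nat) \<Rightarrow> bool" where
  "prod_adj t x y = (\<forall>i<t. x i \<noteq> y i)"

definition dominating :: "'a set \<Rightarrow> ('a \<Rightarrow> 'a \<Rightarrow> bool) \<Rightarrow> 'a set \<Rightarrow> bool" where
  "dominating V E D = (D \<subseteq> V \<and> (\<forall>v\<in>V. v \<in> D \<or> (\<exists>u\<in>D. E v u)))"

definition domination_number :: "'a set \<Rightarrow> ('a \<Rightarrow> 'a \<Rightarrow> bool) \<Rightarrow> nat" where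
  "domination_number V E = (LEAST k. \<exists>D. dominating V E D \<and> finite D \<and> card D = k)"

definition binvecs :: "nat \<Rightarrow> (nat \<Rightarrow> bool) set" where
  "binvecs t = (\<Pi>\<^sub>E i\<in>{..<t}. UNIV)"

definition hamming :: "nat \<Rightarrow> (nat \<Rightarrow> bool) \<Rightarrow> (nat \<Rightarrow> bool) \<Rightarrow> nat" where
  "hamming t x y = card {i\<in>{..<t}. x i \<noteq> y i}"

definition A_code :: "nat \<Rightarrow> nat \<Rightarrow> nat \<Rightarrow> nat" where
  "A_code t d e = Max {card C | C. C \<subseteq> binvecs t \<and>
     (\<forall>x\<in>C. \<forall>y\<in>C. x \<noteq> y \<longrightarrow> d \<le> hamming t x y \<and> hamming t x y \<le> e)}"

end

theory Submission
  imports Defs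
begin

lemma finite_binvecs: "finite (binvecs t)"
  by (simp add: binvecs_def finite_PiE)

lemma card_binvecs: "card (binvecs t) = 2 ^ t"
  by (simp add: binvecs_def card_PiE)

definition emb :: "nat \<Rightarrow> (nat \<Rightarrow> bool) \<Rightarrow> (nat \<Rightarrow> nat)" where
  "emb t b = (\<lambda>i. if i < t then (if b i then 1 else 0) else undefined)"

lemma emb_inj: "inj_on (emb t) (binvecs t)"
proof
  fix b b' assume b: "b \<in> binvecs t" and b': "b' \<in> binvecs t" and e: "emb t b = emb t b'"
  show "b = b'"
  proof
    fix i show "b i = b' i"
    proof (cases "i < t")
      case True
      then have "emb t b i = emb t b' i" using e by simp
      with True show ?thesis by (simp add: emb_def split: if_splits)
    next
      case False
      then show ?thesis using b b' by (simp add: binvecs_def PiE_def extensional_def)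
    qed
  qed
qed

lemma par:
  assumes "j \<in> S" "\<forall>i\<in>S. i \<noteq> j \<longrightarrow> c i = c' i" "c j \<noteq> c' j" "finite S"
  shows "odd (card {i\<in>S. c i}) \<noteq> odd (card {i\<in>S. c' i})"
proof (cases "c j")
  case True
  have "{i\<in>S. c i} = insert j {i\<in>S. c' i}" using assms True by auto
  moreover have "j \<notin> {i\<in>S. c' i}" using assms True by auto
  ultimately show ?thesis using assms(4) by simp
next
  case False
  have "{i\<in>S. c' i} = insert j {i\<in>S. c i}" using assms False by auto
  moreover have "j \<notin> {i\<in>S. c i}" using assms False by auto
  ultimately show ?thesis using assms(4) by simp
qed

definition iscode :: "nat \<Rightarrow> (nat \<Rightarrow> bool) set \<Rightarrow> bool" where
  "iscode t C = (C \<subseteq> binvecs t \<and>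
     (\<forall>x\<in>C. \<forall>y\<in>C. x \<noteq> y \<longrightarrow> 2 \<le> hamming t x y \<and> hamming t x y \<le> t - 1))"

lemma A_set_finite: "finite {card C | C. C \<subseteq> binvecs t \<and> P C}"
  by (rule finite_subset[of _ "card ` Pow (binvecs t)"]) (auto simp: finite_binvecs)

lemma A_attained: "\<exists>C. iscode t C \<and> card C = A_code t 2 (t - 1)"
proof -
  let ?S = "{card C | C. C \<subseteq> binvecs t \<and>
     (\<forall>x\<in>C. \<forall>y\<in>C. x \<noteq> y \<longrightarrow> 2 \<le> hamming t x y \<and> hamming t x y \<le> t - 1)}"
  have "finite ?S" by (rule A_set_finite)
  moreover have "?S \<noteq> {}" by auto
  ultimately have "Max ?S \<in> ?S" by (rule Max_in)
  then obtain C where C: "Max ?S = card C" "C \<subseteq> binvecs t"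
     "\<forall>x\<in>C. \<forall>y\<in>C. x \<noteq> y \<longrightarrow> 2 \<le> hamming t x y \<and> hamming t x y \<le> t - 1"
    by (simp only: mem_Collect_eq) blast
  have "iscode t C" unfolding iscode_def using C(2,3) by blast
  moreover have "card C = A_code t 2 (t - 1)" unfolding A_code_def using C(1) by simp
  ultimately show ?thesis by blast
qed

lemma A_ge: assumes "iscode t C" shows "card C \<le> A_code t 2 (t - 1)"
  unfolding A_code_def
  by (rule Max_ge[OF A_set_finite]) (use assms in \<open>auto simp: iscode_def\<close>)

lemma dom_bound:
  assumes t: "t \<ge> 1" and n: "\<forall>i<t. n i \<ge> 2" and C: "iscode t C"
  shows "domination_number (prod_verts t n) (prod_adj t) \<le> 2 ^ t - card C"
proof -
  have Csub: "C \<subseteq> binvecs t" using C by (simp add: iscode_def)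
  have Ccode: "\<And>x y. x \<in> C \<Longrightarrow> y \<in> C \<Longrightarrow> x \<noteq> y \<Longrightarrow> 2 \<le> hamming t x y \<and> hamming t x y \<le> t - 1"
    using C by (simp add: iscode_def)
  define D where "D = emb t ` (binvecs t - C)"
  have finC: "finite C" using Csub finite_binvecs finite_subset by blast
  have cardD: "card D = 2 ^ t - card C"
  proof -
    have "card D = card (binvecs t - C)" unfolding D_def
      by (rule card_image) (meson Diff_subset emb_inj inj_on_subset)
    also have "\<dots> = 2 ^ t - card C" using card_Diff_subset[OF finC Csub] card_binvecs by simp
    finally show ?thesis .
  qed
  have finD: "finite D" unfolding D_def using finite_binvecs by simp
  have memD: "\<And>b. b \<in> binvecs t \<Longrightarrow> b \<notin> C \<Longrightarrow> emb t b \<in> D" unfolding D_def by auto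
  have rb: "\<And>P. restrict P {..<t} \<in> binvecs t" by (simp add: binvecs_def)
  have dom: "dominating (prod_verts t n) (prod_adj t) D"
    unfolding dominating_def
  proof (intro conjI ballI)
    show "D \<subseteq> prod_verts t n"
    proof
      fix x assume "x \<in> D"
      then obtain b where "x = emb t b" unfolding D_def by auto
      then show "x \<in> prod_verts t n" using n
        by (force simp: prod_verts_def emb_def PiE_def extensional_def)
    qed
  next
    fix v assume v: "v \<in> prod_verts t n"
    have vout: "\<And>i. i \<ge> t \<Longrightarrow> v i = undefined" using v
      by (simp add: prod_verts_def PiE_def extensional_def)
    show "v \<in> D \<or> (\<exists>u\<in>D. prod_adj t v u)"
    proof (cases "\<exists>j<t. v j \<ge> 2")
      case True
      then obtain j where j: "j < t" "v j \<ge> 2" by auto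
      define b where "b = restrict (\<lambda>i. v i = 0) {..<t}"
      define b2 where "b2 = restrict (\<lambda>i. if i = j then v i \<noteq> 0 else v i = 0) {..<t}"
      have a1: "prod_adj t v (emb t b)" unfolding prod_adj_def emb_def b_def by auto
      have a2: "prod_adj t v (emb t b2)" unfolding prod_adj_def emb_def b2_def using j by auto
      have "{i\<in>{..<t}. b i \<noteq> b2 i} = {j}" using j unfolding b_def b2_def by auto
      then have h: "hamming t b b2 = 1" by (simp add: hamming_def)
      have "b j \<noteq> b2 j" using j unfolding b_def b2_def by simp
      then have ne: "b \<noteq> b2" by auto
      have "b \<notin> C \<or> b2 \<notin> C" using Ccode[of b b2] h ne by auto
      moreover have "b \<in> binvecs t" "b2 \<in> binvecs t" unfolding b_def b2_def by (rule rb)+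
      ultimately show ?thesis using a1 a2 memD by metis
    next
      case False
      define b where "b = restrict (\<lambda>i. v i = 1) {..<t}"
      define b' where "b' = restrict (\<lambda>i. v i = 0) {..<t}"
      have vb: "v = emb t b"
      proof
        fix i show "v i = emb t b i"
        proof (cases "i < t")
          case True
          then have "v i = 0 \<or> v i = 1" using False by fastforce
          then show ?thesis using True unfolding emb_def b_def by auto
        next
          case False
          then show ?thesis using vout[of i] unfolding emb_def by simp
        qed
      qed
      have a: "prod_adj t v (emb t b')" unfolding prod_adj_def emb_def b'_def by auto
      have "{i\<in>{..<t}. b i \<noteq> b' i} = {..<t}" using False unfolding b_def b'_def by auto
      then have h: "hamming t b b' = t" by (simp add: hamming_def)
      have "v 0 < 2" using False t by fastforce
      then have "b 0 \<noteq> b' 0" using t unfolding b_def b'_def by auto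
      then have ne: "b \<noteq> b'" by auto
      have "b \<notin> C \<or> b' \<notin> C" using Ccode[of b b'] h ne t by auto
      moreover have "b \<in> binvecs t" "b' \<in> binvecs t" unfolding b_def b'_def by (rule rb)+
      ultimately show ?thesis using a vb memD by metis
    qed
  qed
  have "domination_number (prod_verts t n) (prod_adj t) \<le> card D"
    unfolding domination_number_def by (rule Least_le) (use dom finD in blast)
  then show ?thesis using cardD by simp
qed

lemma big_code:
  assumes t: "t \<ge> 2"
  shows "\<exists>C. iscode t C \<and> card C = 2 ^ (t - 2)"
proof -
  define P where "P = (\<Pi>\<^sub>E i\<in>{2..<t}. (UNIV :: bool set))"
  define e where "e = (\<lambda>c. restrict (\<lambda>i. if i = 0 then False else if i = 1
      then odd (card {j\<in>{2..<t}. c j}) else c i) {..<t})"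
  have cardP: "card P = 2 ^ (t - 2)" by (simp add: P_def card_PiE)
  have inj: "inj_on e P"
  proof
    fix c c' assume c: "c \<in> P" and c': "c' \<in> P" and ee: "e c = e c'"
    show "c = c'"
    proof (rule PiE_ext[OF c[unfolded P_def] c'[unfolded P_def]])
      fix i assume i: "i \<in> {2..<t}"
      have "e c i = e c' i" using ee by simp
      with i show "c i = c' i" unfolding e_def by auto
    qed
  qed
  have sub: "e ` P \<subseteq> binvecs t" unfolding e_def binvecs_def by auto
  have code: "\<forall>x\<in>e ` P. \<forall>y\<in>e ` P. x \<noteq> y \<longrightarrow> 2 \<le> hamming t x y \<and> hamming t x y \<le> t - 1"
  proof (intro ballI impI)
    fix x y assume x: "x \<in> e ` P" and y: "y \<in> e ` P" and xy: "x \<noteq> y"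
    obtain c where c: "c \<in> P" "x = e c" using x by auto
    obtain c' where c': "c' \<in> P" "y = e c'" using y by auto
    have "c \<noteq> c'" using xy c c' by auto
    then obtain j where j: "j \<in> {2..<t}" "c j \<noteq> c' j"
      using PiE_ext[OF c(1)[unfolded P_def] c'(1)[unfolded P_def]] by blast
    let ?H = "{i\<in>{..<t}. x i \<noteq> y i}"
    have "?H \<subseteq> {1..<t}" using c c' unfolding e_def by auto
    then have "card ?H \<le> card {1..<t}" by (rule card_mono[rotated]) simp
    then have up: "hamming t x y \<le> t - 1" by (simp add: hamming_def)
    have finH: "finite ?H" by simp
    have lo: "2 \<le> card ?H"
    proof (cases "\<exists>k\<in>{2..<t}. k \<noteq> j \<and> c k \<noteq> c' k")
      case True
      then obtain k where k: "k \<in> {2..<t}" "k \<noteq> j" "c k \<noteq> c' k" by blast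
      have "{j, k} \<subseteq> ?H" using j k c c' unfolding e_def by auto
      from card_mono[OF finH this] k show ?thesis by simp
    next
      case False
      have pre: "\<forall>i\<in>{2..<t}. i \<noteq> j \<longrightarrow> c i = c' i" using False by blast
      have "odd (card {i\<in>{2..<t}. c i}) \<noteq> odd (card {i\<in>{2..<t}. c' i})"
        using par[OF j(1) pre j(2)] by simp
      then have "{1, j} \<subseteq> ?H" using j c c' t unfolding e_def by auto
      from card_mono[OF finH this] j show ?thesis by simp
    qed
    show "2 \<le> hamming t x y \<and> hamming t x y \<le> t - 1" using up lo by (simp add: hamming_def)
  qed
  have "iscode t (e ` P)" using sub code by (simp add: iscode_def)
  moreover have "card (e ` P) = 2 ^ (t - 2)" using card_image[OF inj] cardP by simp
  ultimately show ?thesis by blast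
qed

theorem corollary4p6:
  fixes t :: nat and n :: "nat \<Rightarrow> nat"
  assumes "t \<ge> 1" and "\<forall>i<t. n i \<ge> 2"
  shows "real (domination_number (prod_verts t n) (prod_adj t))
           \<le> 2 ^ t - real (A_code t 2 (t - 1))
       \<and> 2 ^ t - real (A_code t 2 (t - 1)) \<le> 3 * 2 ^ t / (4::real)"
proof
  obtain C where C: "iscode t C" "card C = A_code t 2 (t - 1)" using A_attained by blast
  have "card C \<le> 2 ^ t" using C(1) card_mono[OF finite_binvecs] card_binvecs
    by (metis iscode_def)
  then have e: "real (2 ^ t - card C) = 2 ^ t - real (card C)" by (simp add: of_nat_diff)
  have "real (domination_number (prod_verts t n) (prod_adj t)) \<le> real (2 ^ t - card C)"
    using dom_bound[OF assms C(1)] by linarith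
  then show "real (domination_number (prod_verts t n) (prod_adj t))
           \<le> 2 ^ t - real (A_code t 2 (t - 1))"
    using e C(2) by simp
next
  show "2 ^ t - real (A_code t 2 (t - 1)) \<le> 3 * 2 ^ t / (4::real)"
  proof (cases "t = 1")
    case True
    obtain b where b: "b \<in> binvecs t" using finite_binvecs card_binvecs
      by (metis card.empty ex_in_conv power_not_zero zero_neq_numeral)
    have "iscode t {b}" using b by (simp add: iscode_def)
    then have "1 \<le> A_code t 2 (t - 1)" using A_ge by fastforce
    then show ?thesis using True by simp
  next
    case False
    then have t2: "t \<ge> 2" using assms(1) by simp
    obtain C where "iscode t C" "card C = 2 ^ (t - 2)" using big_code[OF t2] by blast
    then have "2 ^ (t - 2) \<le> A_code t 2 (t - 1)" using A_ge by metis
    then have a: "real (2 ^ (t - 2)) \<le> real (A_code t 2 (t - 1))" by linarith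
    obtain m where m: "t = m + 2" using t2 le_Suc_ex by (metis add.commute)
    have "(2::real) ^ t = 4 * 2 ^ (t - 2)" unfolding m by (simp add: power_add)
    then show ?thesis using a by simp
  qed
qed

end
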